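(* Let $V$ be an $n$-dimensional complex vector space and $P\subset V\oplus V$ a linear relation with $\dim P=n$. Then: (a) $\lambda^m(P)\neq0$ if and only if $\dim\mathrm{Indef}\,P\le m\le\dim\mathrm{Im}\,P$. (b) If $m=\dim\mathrm{Indef}\,P$, then $\mathrm{rk}\,\lambda^m(P)=1$, and $\lambda^m(P)=\lambda^m(Q)$ (up to a nonzero factor) for any linear relation $Q$ with $\dim Q=n$, $\mathrm{Indef}\,Q=\mathrm{Indef}\,P$, $\mathrm{Dom}\,Q=\mathrm{Dom}\,P$; in particular one may take $Q=\mathrm{Dom}\,P\oplus\mathrm{Indef}\,P$. (c) If $m=\dim\mathrm{Im}\,P$, then $\mathrm{rk}\,\lambda^m(P)=1$, and $\lambda^m(P)=\lambda^m(R)$ (up to a nonzero factor) for any linear relation $R$ with $\dim R=n$, $\mathrm{Im}\,R=\mathrm{Im}\,P$, $\mathrm{Ker}\,R=\mathrm{Ker}\,P$; in particular one may take $R=\mathrm{Ker}\,P\oplus\mathrm{Im}\,P$.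
   Context: A linear relation $P:V\rightrightarrows V$ is a linear subspace $P\subset V\oplus V$. $\mathrm{Ker}\,P=\{v: v\oplus0\in P\}$, $\mathrm{Dom}\,P$ is the projection of $P$ onto the first summand, $\mathrm{Im}\,P$ the projection onto the second summand, $\mathrm{Indef}\,P=\{w:0\oplus w\in P\}$. If $\dim P=n$, there exist bases $f_1,\dots,f_a,g_1,\dots,g_b,h_1,\dots,h_c$ and $F_1,\dots,F_a,G_1,\dots,G_b,H_1,\dots,H_c$ of $V$ such that $P$ is spanned by the vectors $0\oplus F_i$, $g_j\oplus G_j$, $h_k\oplus0$. The operator $\lambda(P):\Lambda V\to\Lambda V$ sends $f_1\wedge\dots\wedge f_a\wedge g_{i_1}\wedge\dots\wedge g_{i_s}$ (for $i_1<\dots<i_s$) to $F_1\wedge\dots\wedge F_a\wedge G_{i_1}\wedge\dots\wedge G_{i_s}$ and annihilates all other wedge monomials in the basis $f,g,h$; it depends on the choice of bases only up to a nonzero scalar factor. $\lambda^m(P)$ is the restriction of $\lambda(P)$ to $\Lambda^mV\to\Lambda^mV$. Equalities between such operators are understood up to a nonzero scalar factor. *)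

theory Defs
  imports "HOL-Analysis.Analysis"
begin

text \<open>The ambient space is V = complex^'n (dimension n = CARD('n)); the index type
 carries a linear order, used only to fix the sign convention of wedge monomials.
 The exterior algebra \<Lambda>V is represented as complex^('n set): the coordinate at a set
 S of indices is the coefficient of the basis monomial e_S (indices in increasing order).\<close>

interpretation vpair: vector_space_prod
  "(*s) :: 'a::field \<Rightarrow> 'a^'n \<Rightarrow> 'a^'n" "(*s) :: 'a::field \<Rightarrow> 'a^'m \<Rightarrow> 'a^'m"
  by unfold_locales

type_synonym 'n vsp = "complex ^ 'n"
type_synonym 'n ext = "complex ^ ('n set)"

text \<open>Linear relation P : V \<rightrightarrows> V, i.e. a linear subspace of V \<oplus> V.\<close>
definition linrel :: "('n::finite vsp \<times> 'n vsp) set \<Rightarrow> bool" where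
  "linrel P \<longleftrightarrow> vpair.p.subspace P"

definition rdim :: "('n::finite vsp \<times> 'n vsp) set \<Rightarrow> nat" where
  "rdim P = vpair.p.dim P"

definition rKer :: "('n::finite vsp \<times> 'n vsp) set \<Rightarrow> 'n vsp set" where
  "rKer P = {v. (v, 0) \<in> P}"
definition rDom :: "('n::finite vsp \<times> 'n vsp) set \<Rightarrow> 'n vsp set" where
  "rDom P = fst ` P"
definition rIm :: "('n::finite vsp \<times> 'n vsp) set \<Rightarrow> 'n vsp set" where
  "rIm P = snd ` P"
definition rIndef :: "('n::finite vsp \<times> 'n vsp) set \<Rightarrow> 'n vsp set" where
  "rIndef P = {w. (0, w) \<in> P}"

text \<open>Wedge product v_0 \<and> ... \<and> v_(k-1) of a list of vectors, as an element of \<Lambda>V: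
 its coefficient at S is the k x k minor on the columns of S (in increasing order).\<close>
definition wedge :: "('n::{finite,linorder}) vsp list \<Rightarrow> 'n ext" where
  "wedge vs = (\<chi> S. if card S = length vs then
      (\<Sum>p | p permutes {..<length vs}. of_int (sign p) *
         (\<Prod>i<length vs. (vs ! i) $ (sorted_list_of_set S ! p i)))
      else 0)"

text \<open>Homogeneous component \<Lambda>^m V.\<close>
definition extpow :: "nat \<Rightarrow> ('n::finite) ext set" where
  "extpow m = {x. \<forall>S. card S \<noteq> m \<longrightarrow> x $ S = 0}"

definition is_basis_list :: "('n::finite) vsp list \<Rightarrow> bool" where
  "is_basis_list bs \<longleftrightarrow> distinct bs \<and> vec.independent (set bs) \<and> vec.span (set bs) = UNIV"

text \<open>L is an admissible choice of the operator \<lambda>(P) : \<Lambda>V \<rightarrow> \<Lambda>V: there are bases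
 f@g@h and F@G@H of V with P spanned by 0\<oplus>F_i, g_j\<oplus>G_j, h_k\<oplus>0, and L is the linear
 map sending the monomial over f_1..f_a,g_{i_1}..g_{i_s} to F_1..F_a,G_{i_1}..G_{i_s}
 and annihilating all other monomials in the basis f,g,h.  (\<lambda>(P) is only defined up
 to a nonzero factor; the predicate describes all admissible representatives.)\<close>
definition is_lambda :: "('n::{finite,linorder} vsp \<times> 'n vsp) set \<Rightarrow> ('n ext \<Rightarrow> 'n ext) \<Rightarrow> bool" where
  "is_lambda P L \<longleftrightarrow> (\<exists>f g h F G H.
     length F = length f \<and> length G = length g \<and> length H = length h \<and>
     is_basis_list (f @ g @ h) \<and> is_basis_list (F @ G @ H) \<and>
     P = vpair.p.span ((\<lambda>v. (0, v)) ` set F \<union> set (zip g G) \<union> (\<lambda>v. (v, 0)) ` set h) \<and>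
     Vector_Spaces.linear (*s) (*s) L \<and>
     (\<forall>T \<subseteq> {..<length (f @ g @ h)}.
        L (wedge (map (\<lambda>i. (f @ g @ h) ! i) (sorted_list_of_set T))) =
          (if {..<length f} \<subseteq> T \<and> T \<subseteq> {..<length f + length g}
           then wedge (map (\<lambda>i. (F @ G @ H) ! i) (sorted_list_of_set T)) else 0)))"

text \<open>\<lambda>^m(L) \<noteq> 0, rank of \<lambda>^m, and equality up to a nonzero scalar of the restrictions to \<Lambda>^m.\<close>
definition deg_nonzero :: "nat \<Rightarrow> ('n::finite ext \<Rightarrow> 'n ext) \<Rightarrow> bool" where
  "deg_nonzero m L \<longleftrightarrow> (\<exists>x \<in> extpow m. L x \<noteq> 0)"

definition deg_rank :: "nat \<Rightarrow> ('n::finite ext \<Rightarrow> 'n ext) \<Rightarrow> nat" where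
  "deg_rank m L = vec.dim (L ` extpow m)"

definition deg_eq_upto :: "nat \<Rightarrow> ('n::finite ext \<Rightarrow> 'n ext) \<Rightarrow> ('n ext \<Rightarrow> 'n ext) \<Rightarrow> bool" where
  "deg_eq_upto m L1 L2 \<longleftrightarrow> (\<exists>c::complex. c \<noteq> 0 \<and> (\<forall>x \<in> extpow m. L1 x = c *s L2 x))"

end

theory Submission
  imports Defs "HOL-Combinatorics.List_Permutation"
begin

lemma wedge_comp:
  "wedge vs $ S = (if card S = length vs then
      (\<Sum>p | p permutes {..<length vs}. of_int (sign p) *
         (\<Prod>i<length vs. (vs ! i) $ (sorted_list_of_set S ! p i)))
      else 0)"
  unfolding wedge_def by simp

lemma wedge_extpow: "wedge vs \<in> extpow (length vs)"
  unfolding extpow_def by (simp add: wedge_comp)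

lemma wedge_perm:
  assumes sig: "\<sigma> permutes {..<length vs}"
  shows "wedge (map (\<lambda>i. vs ! (\<sigma> i)) [0..<length vs]) = of_int (sign \<sigma>) *s wedge vs"
proof (rule vec_eq_iff[THEN iffD2], intro allI)
  fix S :: "'a set"
  let ?m = "length vs"
  let ?s = "sorted_list_of_set S"
  show "wedge (map (\<lambda>i. vs ! (\<sigma> i)) [0..<length vs]) $ S = (of_int (sign \<sigma>) *s wedge vs) $ S"
  proof (cases "card S = ?m")
    case False then show ?thesis by (simp add: wedge_comp)
  next
    case True
    have perm: "permutation \<sigma>" using sig by (rule permutes_imp_permutation[OF finite_lessThan])
    have "wedge (map (\<lambda>i. vs ! (\<sigma> i)) [0..<length vs]) $ S
       = (\<Sum>p | p permutes {..<?m}. of_int (sign p) * (\<Prod>i<?m. vs ! (\<sigma> i) $ (?s ! p i)))"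
      using True by (simp add: wedge_comp)
    also have "\<dots> = (\<Sum>p | p permutes {..<?m}. of_int (sign (p \<circ> \<sigma>)) * (\<Prod>i<?m. vs ! (\<sigma> i) $ (?s ! (p \<circ> \<sigma>) i)))"
      by (rule sum_permutations_compose_right[OF sig, of "\<lambda>p. of_int (sign p) * (\<Prod>i<?m. vs ! (\<sigma> i) $ (?s ! p i))"])
    also have "\<dots> = (\<Sum>p | p permutes {..<?m}. of_int (sign \<sigma>) * (of_int (sign p) * (\<Prod>i<?m. vs ! i $ (?s ! p i))))"
    proof (rule sum.cong[OF refl])
      fix p assume "p \<in> {p. p permutes {..<?m}}"
      then have pp: "permutation p" by (simp add: permutes_imp_permutation[OF finite_lessThan])
      have "(\<Prod>i<?m. vs ! (\<sigma> i) $ (?s ! (p \<circ> \<sigma>) i)) = (\<Prod>i<?m. vs ! i $ (?s ! p i))"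
        using prod.permute[OF sig, of "\<lambda>i. vs ! i $ (?s ! p i)"] by (simp add: o_def)
      then show "of_int (sign (p \<circ> \<sigma>)) * (\<Prod>i<?m. vs ! (\<sigma> i) $ (?s ! (p \<circ> \<sigma>) i)) =
          of_int (sign \<sigma>) * (of_int (sign p) * (\<Prod>i<?m. vs ! i $ (?s ! p i)))"
        by (simp add: sign_compose[OF pp perm])
    qed
    also have "\<dots> = (of_int (sign \<sigma>) *s wedge vs) $ S"
      using True by (simp add: wedge_comp sum_distrib_left)
    finally show ?thesis .
  qed
qed

lemma wedge_repeat:
  assumes a: "a < length vs" and c: "c < length vs" and ac: "a \<noteq> c" and eq: "vs ! a = vs ! c"
  shows "wedge vs = 0"
proof -
  let ?t = "Transposition.transpose a c"
  have tp: "?t permutes {..<length vs}"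
    using a c by (intro permutes_swap_id) auto
  have "map (\<lambda>i. vs ! (?t i)) [0..<length vs] = vs"
    by (rule nth_equalityI) (auto simp: eq Transposition.transpose_def)
  then have "wedge vs = of_int (sign ?t) *s wedge vs"
    using wedge_perm[OF tp] by simp
  then have "wedge vs = - wedge vs"
    using ac by (simp add: sign_swap_id)
  then show ?thesis
    by (simp add: vec_eq_iff)
qed

lemma wedge_expand:
  fixes b :: "nat \<Rightarrow> 'n::{finite,linorder} vsp"
  assumes len: "length vs = m" and fin: "\<And>i. i < m \<Longrightarrow> finite (J i)"
    and vs: "\<And>i. i < m \<Longrightarrow> vs ! i = (\<Sum>j\<in>J i. C i j *s b j)"
  shows "wedge vs = (\<Sum>\<phi>\<in>PiE {..<m} J. (\<Prod>i<m. C i (\<phi> i)) *s wedge (map (\<lambda>i. b (\<phi> i)) [0..<m]))"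
proof (rule vec_eq_iff[THEN iffD2], intro allI)
  fix S :: "'n set"
  let ?s = "sorted_list_of_set S"
  let ?P = "{p. p permutes {..<m}}"
  let ?F = "PiE {..<m} J"
  show "wedge vs $ S = (\<Sum>\<phi>\<in>?F. (\<Prod>i<m. C i (\<phi> i)) *s wedge (map (\<lambda>i. b (\<phi> i)) [0..<m])) $ S"
  proof (cases "card S = m")
    case False
    then show ?thesis using len by (simp add: wedge_comp sum_component)
  next
    case True
    have finF: "finite ?F" using fin by (intro finite_PiE) auto
    have comp: "vs ! i $ x = (\<Sum>j\<in>J i. C i j * b j $ x)" if "i < m" for i x
      using vs[OF that] by (simp add: sum_component)
    have "wedge vs $ S = (\<Sum>p\<in>?P. of_int (sign p) * (\<Prod>i<m. vs ! i $ (?s ! p i)))"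
      using True len by (simp add: wedge_comp)
    also have "\<dots> = (\<Sum>p\<in>?P. of_int (sign p) * (\<Prod>i<m. \<Sum>j\<in>J i. C i j * b j $ (?s ! p i)))"
      by (intro sum.cong refl arg_cong2[where f="(*)"] prod.cong) (auto simp: comp)
    also have "\<dots> = (\<Sum>p\<in>?P. of_int (sign p) * (\<Sum>\<phi>\<in>?F. \<Prod>i<m. C i (\<phi> i) * b (\<phi> i) $ (?s ! p i)))"
      by (intro sum.cong refl arg_cong2[where f="(*)"] prod_sum_PiE) (auto simp: fin)
    also have "\<dots> = (\<Sum>p\<in>?P. \<Sum>\<phi>\<in>?F. (\<Prod>i<m. C i (\<phi> i)) * (of_int (sign p) * (\<Prod>i<m. b (\<phi> i) $ (?s ! p i))))"
      by (simp add: sum_distrib_left prod.distrib mult.assoc mult.left_commute)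
    also have "\<dots> = (\<Sum>\<phi>\<in>?F. \<Sum>p\<in>?P. (\<Prod>i<m. C i (\<phi> i)) * (of_int (sign p) * (\<Prod>i<m. b (\<phi> i) $ (?s ! p i))))"
      by (rule sum.swap)
    also have "\<dots> = (\<Sum>\<phi>\<in>?F. (\<Prod>i<m. C i (\<phi> i)) * wedge (map (\<lambda>i. b (\<phi> i)) [0..<m]) $ S)"
    proof (rule sum.cong[OF refl])
      fix \<phi> assume "\<phi> \<in> ?F"
      have "wedge (map (\<lambda>i. b (\<phi> i)) [0..<m]) $ S = (\<Sum>p\<in>?P. of_int (sign p) * (\<Prod>i<m. (map (\<lambda>i. b (\<phi> i)) [0..<m]) ! i $ (?s ! p i)))"
        using True by (simp add: wedge_comp)
      also have "\<dots> = (\<Sum>p\<in>?P. of_int (sign p) * (\<Prod>i<m. b (\<phi> i) $ (?s ! p i)))"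
        by (intro sum.cong refl arg_cong2[where f="(*)"] prod.cong) auto
      finally show "(\<Sum>p\<in>?P. (\<Prod>i<m. C i (\<phi> i)) * (of_int (sign p) * (\<Prod>i<m. b (\<phi> i) $ (?s ! p i)))) =
          (\<Prod>i<m. C i (\<phi> i)) * wedge (map (\<lambda>i. b (\<phi> i)) [0..<m]) $ S"
        by (simp add: sum_distrib_left)
    qed
    also have "\<dots> = (\<Sum>\<phi>\<in>?F. (\<Prod>i<m. C i (\<phi> i)) *s wedge (map (\<lambda>i. b (\<phi> i)) [0..<m])) $ S"
      by (simp add: sum_component)
    finally show ?thesis .
  qed
qed

lemma span_coeffs:
  fixes b :: "nat \<Rightarrow> 'n::finite vsp"
  assumes fin: "finite J" and x: "x \<in> vec.span (b ` J)"
  shows "\<exists>c. x = (\<Sum>j\<in>J. c j *s b j)"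
  using x
proof (induction rule: vec.span_induct_alt)
  case base
  show ?case by (rule exI[of _ "\<lambda>_. 0"]) simp
next
  case (step c0 x y)
  then obtain c where c: "y = (\<Sum>j\<in>J. c j *s b j)" by blast
  from step obtain j0 where j0: "j0 \<in> J" "x = b j0" by blast
  have "(\<Sum>j\<in>J. (c j + (if j = j0 then c0 else 0)) *s b j) = y + (\<Sum>j\<in>J. (if j = j0 then c0 else 0) *s b j)"
    by (simp add: c vec.scale_left_distrib sum.distrib)
  also have "(\<Sum>j\<in>J. (if j = j0 then c0 else 0) *s b j) = (\<Sum>j\<in>J. (if j = j0 then c0 *s b j else 0))"
    by (intro sum.cong) auto
  also have "\<dots> = c0 *s x" using fin j0 by simp
  finally show ?case by (metis add.commute)
qed

lemma wedge_sort:
  fixes b :: "nat \<Rightarrow> 'n::{finite,linorder} vsp"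
  assumes inj: "inj_on \<phi> {..<m}"
  shows "\<exists>\<sigma>::nat\<Rightarrow>nat. wedge (map (\<lambda>i. b (\<phi> i)) [0..<m]) = of_int (sign \<sigma>) *s wedge (map b (sorted_list_of_set (\<phi> ` {..<m})))"
proof -
  let ?t = "sorted_list_of_set (\<phi> ` {..<m})"
  let ?xs = "map \<phi> [0..<m]"
  have d: "distinct ?xs" using inj by (simp add: distinct_map atLeast0LessThan)
  have st: "set ?xs = set ?t" by auto
  have lt: "length ?t = m" using inj by (simp add: card_image)
  have "mset ?xs = mset ?t"
    using set_eq_iff_mset_eq_distinct[OF d distinct_sorted_list_of_set] st by blast
  then obtain f where f: "bij_betw f {..<length ?xs} {..<length ?t}" "\<forall>i<length ?xs. ?xs ! i = ?t ! (f i)"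
    using permutation_Ex_bij by blast
  define \<sigma> where "\<sigma> = (\<lambda>i. if i < m then f i else i)"
  have f1: "bij_betw f {..<m} {..<m}" using f(1) lt by simp
  have "bij_betw \<sigma> {..<m} {..<m} = bij_betw f {..<m} {..<m}"
    by (rule bij_betw_cong) (simp add: \<sigma>_def)
  with f1 have "bij_betw \<sigma> {..<m} {..<m}" by simp
  moreover have "\<And>x. x \<notin> {..<m} \<Longrightarrow> \<sigma> x = x" by (simp add: \<sigma>_def)
  ultimately have sp0: "\<sigma> permutes {..<m}" by (rule bij_imp_permutes)
  have sp: "\<sigma> permutes {..<length (map b ?t)}" using sp0 lt by simp
  have meq: "map (\<lambda>i. (map b ?t) ! (\<sigma> i)) [0..<length (map b ?t)] = map (\<lambda>i. b (\<phi> i)) [0..<m]"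
  proof (rule nth_equalityI)
    show "length (map (\<lambda>i. (map b ?t) ! (\<sigma> i)) [0..<length (map b ?t)]) = length (map (\<lambda>i. b (\<phi> i)) [0..<m])"
      using lt by simp
  next
    fix i assume "i < length (map (\<lambda>i. (map b ?t) ! (\<sigma> i)) [0..<length (map b ?t)])"
    then have i: "i < m" using lt by simp
    have fi: "f i < m" using bij_betw_apply[OF f1] i by blast
    have il: "i < length ?xs" using i by simp
    have x1: "?xs ! i = ?t ! (f i)" using f(2) il by blast
    have x2: "?xs ! i = \<phi> i" using i by simp
    have phi: "?t ! (f i) = \<phi> i" using x1 x2 by metis
    show "map (\<lambda>i. (map b ?t) ! (\<sigma> i)) [0..<length (map b ?t)] ! i = map (\<lambda>i. b (\<phi> i)) [0..<m] ! i"
      using i fi lt phi by (simp add: \<sigma>_def)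
  qed
  have "wedge (map (\<lambda>i. b (\<phi> i)) [0..<m]) = of_int (sign \<sigma>) *s wedge (map b ?t)"
    using wedge_perm[OF sp] unfolding meq .
  then show ?thesis by (intro exI[of _ \<sigma>])
qed

lemma wedge_in_span:
  fixes b :: "nat \<Rightarrow> 'n::{finite,linorder} vsp"
  assumes len: "length vs = m" and fin: "\<And>i. i < m \<Longrightarrow> finite (J i)"
    and vs: "\<And>i. i < m \<Longrightarrow> vs ! i \<in> vec.span (b ` J i)"
  shows "wedge vs \<in> vec.span {wedge (map b (sorted_list_of_set (\<phi> ` {..<m}))) | \<phi>. \<phi> \<in> PiE {..<m} J \<and> inj_on \<phi> {..<m}}"
    (is "_ \<in> vec.span ?W")
proof -
  have ex: "\<exists>c. vs ! i = (\<Sum>j\<in>J i. c j *s b j)" if "i < m" for i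
    using span_coeffs[OF fin[OF that] vs[OF that]] .
  have "\<forall>i. \<exists>c. i < m \<longrightarrow> vs ! i = (\<Sum>j\<in>J i. c j *s b j)"
  proof
    fix i show "\<exists>c. i < m \<longrightarrow> vs ! i = (\<Sum>j\<in>J i. c j *s b j)"
      using ex[of i] by (cases "i < m") auto
  qed
  then have "\<exists>C. \<forall>i. i < m \<longrightarrow> vs ! i = (\<Sum>j\<in>J i. C i j *s b j)"
    by (rule choice)
  then obtain C where C0: "\<forall>i. i < m \<longrightarrow> vs ! i = (\<Sum>j\<in>J i. C i j *s b j)"
    by (elim exE)
  have C: "\<And>i. i < m \<Longrightarrow> vs ! i = (\<Sum>j\<in>J i. C i j *s b j)" using C0 by simp
  have "wedge vs = (\<Sum>\<phi>\<in>PiE {..<m} J. (\<Prod>i<m. C i (\<phi> i)) *s wedge (map (\<lambda>i. b (\<phi> i)) [0..<m]))"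
    by (rule wedge_expand[OF len fin C])
  also have "\<dots> \<in> vec.span ?W"
  proof (intro vec.span_sum vec.span_scale)
    fix \<phi> assume phi: "\<phi> \<in> PiE {..<m} J"
    show "wedge (map (\<lambda>i. b (\<phi> i)) [0..<m]) \<in> vec.span ?W"
    proof (cases "inj_on \<phi> {..<m}")
      case True
      then obtain \<sigma> :: "nat \<Rightarrow> nat" where "wedge (map (\<lambda>i. b (\<phi> i)) [0..<m]) = of_int (sign \<sigma>) *s wedge (map b (sorted_list_of_set (\<phi> ` {..<m})))"
        using wedge_sort[OF True] by blast
      moreover have "wedge (map b (sorted_list_of_set (\<phi> ` {..<m}))) \<in> ?W"
        using phi True by blast
      ultimately show ?thesis by (simp add: vec.span_scale vec.span_base)
    next
      case False
      then obtain a c where ac: "a < m" "c < m" "a \<noteq> c" "\<phi> a = \<phi> c"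
        unfolding inj_on_def by blast
      have "wedge (map (\<lambda>i. b (\<phi> i)) [0..<m]) = 0"
        by (rule wedge_repeat[of a _ c]) (use ac in simp_all)
      then show ?thesis by (simp add: vec.span_zero)
    qed
  qed
  finally show ?thesis .
qed

lemma wedge_axis:
  fixes S :: "'n::{finite,linorder} set"
  shows "wedge (map (\<lambda>s. axis s 1) (sorted_list_of_set S)) = axis S 1"
proof (rule vec_eq_iff[THEN iffD2], intro allI)
  fix S' :: "'n set"
  let ?s = "sorted_list_of_set S" and ?s' = "sorted_list_of_set S'"
  let ?m = "card S"
  have ls: "length ?s = ?m" by simp
  show "wedge (map (\<lambda>s. axis s 1) ?s) $ S' = axis S 1 $ S'"
  proof (cases "card S' = ?m")
    case False
    then have "S' \<noteq> S" by auto
    then show ?thesis using False by (simp add: wedge_comp axis_def)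
  next
    case True
    have w: "wedge (map (\<lambda>s. axis s 1) ?s) $ S' = (\<Sum>p | p permutes {..<?m}. of_int (sign p) * (\<Prod>i<?m. (if ?s' ! p i = ?s ! i then 1 else 0)))"
      using True ls by (simp add: wedge_comp axis_def)
    show ?thesis
    proof (cases "S' = S")
      case True
      have "(\<Sum>p | p permutes {..<?m}. of_int (sign p) * (\<Prod>i<?m. (if ?s ! p i = ?s ! i then 1 else 0)))
          = (\<Sum>p | p permutes {..<?m}. if p = id then 1 else (0::complex))"
      proof (rule sum.cong[OF refl])
        fix p assume p: "p \<in> {p. p permutes {..<?m}}"
        show "of_int (sign p) * (\<Prod>i<?m. (if ?s ! p i = ?s ! i then 1 else 0)) = (if p = id then 1 else (0::complex))"
        proof (cases "p = id")
          case True then show ?thesis by (simp add: sign_id)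
        next
          case False
          then obtain i where i: "p i \<noteq> i" by (metis eq_id_iff)
          then have im: "i < ?m" using p by (auto simp: permutes_def)
          then have "p i < ?m" using p by (auto dest: permutes_in_image)
          then have "?s ! p i \<noteq> ?s ! i" using i im ls
            by (simp add: nth_eq_iff_index_eq)
          then have "(\<Prod>i<?m. (if ?s ! p i = ?s ! i then 1 else (0::complex))) = 0"
            using im by (intro prod_zero) auto
          then show ?thesis using False by simp
        qed
      qed
      also have "\<dots> = 1"
        by (simp add: permutes_id finite_permutations)
      finally show ?thesis using w True by (simp add: axis_def)
    next
      case False
      have "\<not> S \<subseteq> S'"
        using False True by (metis card_subset_eq finite)
      then obtain x where x: "x \<in> S" "x \<notin> S'" by auto
      then obtain i0 where i0: "i0 < ?m" "?s ! i0 = x"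
        using ls by (metis finite in_set_conv_nth set_sorted_list_of_set)
      have z: "(\<Prod>i<?m. (if ?s' ! p i = ?s ! i then 1 else (0::complex))) = 0" if p: "p permutes {..<?m}" for p
      proof -
        have "p i0 < card S'" using p i0 True by (auto dest: permutes_in_image)
        then have "?s' ! p i0 \<in> S'" by (metis finite nth_mem set_sorted_list_of_set length_sorted_list_of_set)
        then have "?s' ! p i0 \<noteq> ?s ! i0" using x i0 by auto
        then show ?thesis using i0 by (intro prod_zero) auto
      qed
      have "(\<Sum>p | p permutes {..<?m}. of_int (sign p) * (\<Prod>i<?m. (if ?s' ! p i = ?s ! i then 1 else (0::complex)))) = 0"
      proof (rule sum.neutral, rule ballI)
        fix p assume "p \<in> {p. p permutes {..<?m}}"
        then have "p permutes {..<?m}" by simp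
        then show "of_int (sign p) * (\<Prod>i<?m. (if ?s' ! p i = ?s ! i then 1 else (0::complex))) = 0"
          by (simp only: z mult_zero_right)
      qed
      then show ?thesis using w False by (simp add: axis_def)
    qed
  qed
qed

definition WB :: "'n::{finite,linorder} vsp list \<Rightarrow> nat \<Rightarrow> 'n ext set" where
  "WB b k = (\<lambda>T. wedge (map (\<lambda>j. b ! j) (sorted_list_of_set T))) ` {T. T \<subseteq> {..<length b} \<and> card T = k}"

lemma extpow_subspace: "vec.subspace (extpow m)"
  unfolding vec.subspace_def extpow_def by auto

lemma basis_len:
  assumes "is_basis_list (b :: 'n::finite vsp list)"
  shows "length b = CARD('n)"
proof -
  have d: "distinct b" and i: "vec.independent (set b)" and s: "vec.span (set b) = UNIV"
    using assms unfolding is_basis_list_def by auto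
  have "vec.dim (vec.span (set b)) = card (set b)" by (rule vec.dim_span_eq_card_independent[OF i])
  then have "card (set b) = CARD('n)" using s by (simp add: card_cart_basis)
  then show ?thesis using distinct_card[OF d] by simp
qed

lemma ext_expand:
  assumes "x \<in> extpow m"
  shows "x = (\<Sum>S\<in>{S. card S = m}. x $ S *s axis S (1::complex))"
proof (rule vec_eq_iff[THEN iffD2], intro allI)
  fix S' :: "'a set"
  have "(\<Sum>S\<in>{S. card S = m}. x $ S *s axis S (1::complex)) $ S' = (\<Sum>S\<in>{S. card S = m}. x $ S * (if S' = S then 1 else 0))"
    by (simp add: sum_component axis_def)
  also have "\<dots> = (\<Sum>S\<in>{S. card S = m}. if S = S' then x $ S else 0)"
    by (rule sum.cong) auto
  also have "\<dots> = x $ S'"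
    using assms unfolding extpow_def by (simp add: sum.delta)
  finally show "x $ S' = (\<Sum>S\<in>{S. card S = m}. x $ S *s axis S (1::complex)) $ S'" by simp
qed

lemma extpow_span_axis: "extpow m = vec.span {axis S (1::complex) | S. card S = m}"
proof
  show "extpow m \<subseteq> vec.span {axis S (1::complex) | S. card S = m}"
  proof
    fix x assume x: "x \<in> extpow m"
    have "(\<Sum>S\<in>{S. card S = m}. x $ S *s axis S (1::complex)) \<in> vec.span {axis S (1::complex) | S. card S = m}"
      by (intro vec.span_sum vec.span_scale vec.span_base) auto
    then show "x \<in> vec.span {axis S (1::complex) | S. card S = m}"
      using ext_expand[OF x] by simp
  qed
  show "vec.span {axis S (1::complex) | S. card S = m} \<subseteq> extpow m"
    by (rule vec.span_minimal[OF _ extpow_subspace]) (auto simp: extpow_def axis_def)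
qed

lemma dim_extpow: "vec.dim (extpow m :: 'n::finite ext set) = CARD('n) choose m"
proof -
  let ?A = "{axis S (1::complex) | S::'n set. card S = m}"
  have "?A \<subseteq> cart_basis" unfolding cart_basis_def by auto
  then have ind: "vec.independent ?A"
    using vec.independent_mono[OF independent_cart_basis] by blast
  have "?A = (\<lambda>S. axis S (1::complex)) ` {S. card S = m}" by auto
  moreover have "inj_on (\<lambda>S::'n set. axis S (1::complex)) {S. card S = m}"
    by (auto simp: inj_on_def axis_eq_axis)
  ultimately have "card ?A = card {S::'n set. card S = m}" by (simp add: card_image)
  also have "\<dots> = CARD('n) choose m"
    using n_subsets[of "UNIV :: 'n set" m] by simp
  finally have c: "card ?A = CARD('n) choose m" .
  have "vec.dim (extpow m :: 'n ext set) = card ?A"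
    unfolding extpow_span_axis[of m] by (rule vec.dim_span_eq_card_independent[OF ind])
  then show ?thesis using c by simp
qed

lemma WB_extpow: "WB b k \<subseteq> extpow k"
  unfolding WB_def
proof (rule image_subsetI)
  fix T assume "T \<in> {T. T \<subseteq> {..<length b} \<and> card T = k}"
  then have "length (map (\<lambda>j. b ! j) (sorted_list_of_set T)) = k" by simp
  then show "wedge (map (\<lambda>j. b ! j) (sorted_list_of_set T)) \<in> extpow k"
    using wedge_extpow[of "map (\<lambda>j. b ! j) (sorted_list_of_set T)"] by simp
qed

lemma extpow_span_WB:
  assumes b: "is_basis_list (b :: 'n::{finite,linorder} vsp list)"
  shows "extpow m \<subseteq> vec.span (WB b m)"
proof -
  let ?n = "length b"
  have sb: "vec.span (set b) = UNIV" using b unfolding is_basis_list_def by auto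
  have setb: "set b = (\<lambda>j. b ! j) ` {..<?n}" by (auto simp: in_set_conv_nth)
  have ax: "axis S (1::complex) \<in> vec.span (WB b m)" if S: "card S = m" for S :: "'n set"
  proof -
    let ?vs = "map (\<lambda>s. axis s (1::complex)) (sorted_list_of_set S)"
    have "wedge ?vs \<in> vec.span {wedge (map (\<lambda>j. b ! j) (sorted_list_of_set (\<phi> ` {..<m}))) | \<phi>. \<phi> \<in> PiE {..<m} (\<lambda>_. {..<?n}) \<and> inj_on \<phi> {..<m}}"
      by (rule wedge_in_span) (use S sb setb in auto)
    also have "\<dots> \<subseteq> vec.span (WB b m)"
    proof (rule vec.span_mono, rule subsetI)
      fix w assume "w \<in> {wedge (map (\<lambda>j. b ! j) (sorted_list_of_set (\<phi> ` {..<m}))) | \<phi>. \<phi> \<in> PiE {..<m} (\<lambda>_. {..<?n}) \<and> inj_on \<phi> {..<m}}"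
      then obtain \<phi> where phi: "\<phi> \<in> PiE {..<m} (\<lambda>_. {..<?n})" "inj_on \<phi> {..<m}"
        and w: "w = wedge (map (\<lambda>j. b ! j) (sorted_list_of_set (\<phi> ` {..<m})))" by blast
      have "\<phi> ` {..<m} \<subseteq> {..<?n}" using phi(1) by auto
      moreover have "card (\<phi> ` {..<m}) = m" using phi(2) by (simp add: card_image)
      ultimately show "w \<in> WB b m" unfolding WB_def w by blast
    qed
    finally show ?thesis using wedge_axis[of S] by simp
  qed
  show ?thesis
    unfolding extpow_span_axis[of m]
    by (rule vec.span_minimal) (use ax in auto)
qed

lemma span_WB:
  assumes b: "is_basis_list (b :: 'n::{finite,linorder} vsp list)"
  shows "vec.span (WB b m) = extpow m"
  using extpow_span_WB[OF b] WB_extpow[of b m]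
  by (metis extpow_subspace vec.span_subspace)

lemma WB_indep:
  assumes b: "is_basis_list (b :: 'n::{finite,linorder} vsp list)"
  shows "vec.independent (WB b m)"
proof (rule vec.card_le_dim_spanning[OF WB_extpow extpow_span_WB[OF b]])
  show "finite (WB b m)" unfolding WB_def by simp
  have "card (WB b m) \<le> card {T. T \<subseteq> {..<length b} \<and> card T = m}"
    unfolding WB_def by (rule card_image_le) simp
  also have "\<dots> = length b choose m" using n_subsets[of "{..<length b}" m] by simp
  also have "\<dots> = vec.dim (extpow m :: 'n ext set)" by (simp add: dim_extpow basis_len[OF b])
  finally show "card (WB b m) \<le> vec.dim (extpow m :: 'n ext set)" .
qed

lemma wedge_basis_nonzero:
  assumes b: "is_basis_list (b :: 'n::{finite,linorder} vsp list)"
    and T: "T \<subseteq> {..<length b}"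
  shows "wedge (map (\<lambda>j. b ! j) (sorted_list_of_set T)) \<noteq> 0"
proof
  assume z: "wedge (map (\<lambda>j. b ! j) (sorted_list_of_set T)) = 0"
  have "0 \<in> WB b (card T)" unfolding WB_def using T z[symmetric] by blast
  then show False using WB_indep[OF b] vec.dependent_zero by blast
qed

lemma lin_add: "Vector_Spaces.linear (*s) (*s) L \<Longrightarrow> L (x + y) = L x + L y"
  unfolding Vector_Spaces.linear_iff by blast
lemma lin_scale: "Vector_Spaces.linear (*s) (*s) L \<Longrightarrow> L (c *s x) = c *s L x"
  unfolding Vector_Spaces.linear_iff by blast
lemma lin_zero: "Vector_Spaces.linear (*s) (*s) L \<Longrightarrow> L 0 = 0"
  using lin_scale[of L 0 0] by simp

lemma lin_id: "Vector_Spaces.linear (*s) (*s) (\<lambda>x::'a::field^'n. x)"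
  unfolding Vector_Spaces.linear_iff by (simp add: vec.vector_space_axioms)
lemma lin_0: "Vector_Spaces.linear (*s) (*s) (\<lambda>x::'a::field^'n. 0::'a^'m)"
  unfolding Vector_Spaces.linear_iff by (simp add: vec.vector_space_axioms)
lemma lin_neg: "Vector_Spaces.linear (*s) (*s) L \<Longrightarrow> Vector_Spaces.linear (*s) (*s) (\<lambda>x. - L x)"
  unfolding Vector_Spaces.linear_iff by (simp add: vec.vector_space_axioms)

lemma pair_subspace:
  fixes \<alpha> \<beta> :: "'n::finite vsp \<Rightarrow> 'n vsp"
  assumes la: "Vector_Spaces.linear (*s) (*s) \<alpha>" and lb: "Vector_Spaces.linear (*s) (*s) \<beta>"
    and U: "vec.subspace U"
  shows "vpair.p.subspace {z. \<alpha> (fst z) + \<beta> (snd z) \<in> U}"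
  unfolding vpair.p.subspace_def
proof (intro conjI ballI allI)
  show "0 \<in> {z. \<alpha> (fst z) + \<beta> (snd z) \<in> U}"
    using lin_zero[OF la] lin_zero[OF lb] vec.subspace_0[OF U] by simp
next
  fix x y assume x: "x \<in> {z. \<alpha> (fst z) + \<beta> (snd z) \<in> U}" and y: "y \<in> {z. \<alpha> (fst z) + \<beta> (snd z) \<in> U}"
  have "\<alpha> (fst (x + y)) + \<beta> (snd (x + y)) = (\<alpha> (fst x) + \<beta> (snd x)) + (\<alpha> (fst y) + \<beta> (snd y))"
    by (simp add: lin_add[OF la] lin_add[OF lb] algebra_simps)
  then show "x + y \<in> {z. \<alpha> (fst z) + \<beta> (snd z) \<in> U}"
    using x y vec.subspace_add[OF U] by simp
next
  fix c x assume x: "x \<in> {z. \<alpha> (fst z) + \<beta> (snd z) \<in> U}"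
  have x': "\<alpha> (fst x) + \<beta> (snd x) \<in> U" using x by simp
  have eq: "\<alpha> (fst (vpair.scale c x)) + \<beta> (snd (vpair.scale c x)) = c *s (\<alpha> (fst x) + \<beta> (snd x))"
    by (simp add: vpair.scale_def lin_scale[OF la] lin_scale[OF lb] vec.scale_right_distrib)
  show "vpair.scale c x \<in> {z. \<alpha> (fst z) + \<beta> (snd z) \<in> U}"
    using vec.subspace_scale[OF U x', of c] by (simp only: mem_Collect_eq eq)
qed

lemma span_lift:
  fixes X :: "('n::finite vsp \<times> 'n vsp) set"
  assumes A: "\<And>v. v \<in> A \<Longrightarrow> \<exists>w. (v, w) \<in> vpair.p.span X"
    and x: "x \<in> vec.span A"
  shows "\<exists>y. (x, y) \<in> vpair.p.span X"
  using x
proof (induction rule: vec.span_induct_alt)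
  case base
  show ?case using vpair.p.span_zero by (auto simp: zero_prod_def)
next
  case (step c v x)
  then obtain w y where w: "(v, w) \<in> vpair.p.span X" and y: "(x, y) \<in> vpair.p.span X"
    using A by blast
  have "vpair.scale c (v, w) + (x, y) \<in> vpair.p.span X"
    using w y by (intro vpair.p.span_add vpair.p.span_scale)
  then have "(c *s v + x, c *s w + y) \<in> vpair.p.span X" by (simp add: vpair.scale_prod)
  then show ?case by blast
qed

lemma span_lift2:
  fixes X :: "('n::finite vsp \<times> 'n vsp) set"
  assumes A: "\<And>v. v \<in> A \<Longrightarrow> \<exists>w. (w, v) \<in> vpair.p.span X"
    and x: "x \<in> vec.span A"
  shows "\<exists>y. (y, x) \<in> vpair.p.span X"
  using x
proof (induction rule: vec.span_induct_alt)
  case base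
  show ?case using vpair.p.span_zero by (auto simp: zero_prod_def)
next
  case (step c v x)
  then obtain w y where w: "(w, v) \<in> vpair.p.span X" and y: "(y, x) \<in> vpair.p.span X"
    using A by blast
  have "vpair.scale c (w, v) + (y, x) \<in> vpair.p.span X"
    using w y by (intro vpair.p.span_add vpair.p.span_scale)
  then have "(c *s w + y, c *s v + x) \<in> vpair.p.span X" by (simp add: vpair.scale_prod)
  then show ?case by blast
qed

lemma span_lift0:
  fixes X :: "('n::finite vsp \<times> 'n vsp) set"
  assumes A: "\<And>v. v \<in> A \<Longrightarrow> (0, v) \<in> vpair.p.span X"
    and x: "x \<in> vec.span A"
  shows "(0, x) \<in> vpair.p.span X"
  using x
proof (induction rule: vec.span_induct_alt)
  case base
  show ?case using vpair.p.span_zero by (auto simp: zero_prod_def)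
next
  case (step c v x)
  have "vpair.scale c (0, v) + (0, x) \<in> vpair.p.span X"
    using step A by (intro vpair.p.span_add vpair.p.span_scale) auto
  then show ?case by (simp add: vpair.scale_prod)
qed

lemma span_lift0':
  fixes X :: "('n::finite vsp \<times> 'n vsp) set"
  assumes A: "\<And>v. v \<in> A \<Longrightarrow> (v, 0) \<in> vpair.p.span X"
    and x: "x \<in> vec.span A"
  shows "(x, 0) \<in> vpair.p.span X"
  using x
proof (induction rule: vec.span_induct_alt)
  case base
  show ?case using vpair.p.span_zero by (auto simp: zero_prod_def)
next
  case (step c v x)
  have "vpair.scale c (v, 0) + (x, 0) \<in> vpair.p.span X"
    using step A by (intro vpair.p.span_add vpair.p.span_scale) auto
  then show ?case by (simp add: vpair.scale_prod)
qed

lemma lin_exists: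
  fixes b c :: "'n::finite vsp list"
  assumes b: "is_basis_list b" and len: "length c = length b"
  shows "\<exists>\<psi>. Vector_Spaces.linear (*s) (*s) \<psi> \<and> (\<forall>i<length b. \<psi> (b ! i) = c ! i)"
proof -
  have d: "distinct b" and ind: "vec.independent (set b)" using b unfolding is_basis_list_def by auto
  define val where "val v = c ! (SOME i. i < length b \<and> b ! i = v)" for v
  have "Vector_Spaces.linear (*s) (*s) (vec.construct (set b) val)"
    by (rule vec.linear_construct[OF ind])
  moreover have "vec.construct (set b) val (b ! i) = c ! i" if i: "i < length b" for i
  proof -
    have "(SOME j. j < length b \<and> b ! j = b ! i) = i"
      using i d by (intro some_equality) (auto simp: nth_eq_iff_index_eq)
    then show ?thesis using vec.construct_basis[OF ind, of "b ! i" val] i by (simp add: val_def)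
  qed
  ultimately show ?thesis by blast
qed

definition genX :: "'n::finite vsp list \<Rightarrow> 'n vsp list \<Rightarrow> 'n vsp list \<Rightarrow> 'n vsp list \<Rightarrow> ('n vsp \<times> 'n vsp) set" where
  "genX F g G h = (\<lambda>v. (0, v)) ` set F \<union> set (zip g G) \<union> (\<lambda>v. (v, 0)) ` set h"

lemma genX_cases:
  assumes "z \<in> genX F g G h" and "length G = length g"
  obtains v where "v \<in> set F" "z = (0, v)"
  | j where "j < length g" "z = (g ! j, G ! j)"
  | v where "v \<in> set h" "z = (v, 0)"
  using assms unfolding genX_def by (auto simp: set_zip)

lemma rel_chars:
  fixes f g h F G H :: "'n::finite vsp list"
  assumes lens: "length F = length f" "length G = length g" "length H = length h"
    and bf: "is_basis_list (f @ g @ h)" and bF: "is_basis_list (F @ G @ H)"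
    and P: "P = vpair.p.span (genX F g G h)"
  shows "rIndef P = vec.span (set F)" and "rIm P = vec.span (set (F @ G))"
    and "rDom P = vec.span (set (g @ h))" and "rKer P = vec.span (set h)"
proof -
  have inF: "(0, v) \<in> P" if "v \<in> set F" for v
    unfolding P by (rule vpair.p.span_base) (use that in \<open>auto simp: genX_def\<close>)
  have inG: "(g ! j, G ! j) \<in> P" if "j < length g" for j
    unfolding P by (rule vpair.p.span_base) (use that lens in \<open>auto simp: genX_def set_zip\<close>)
  have inh: "(v, 0) \<in> P" if "v \<in> set h" for v
    unfolding P by (rule vpair.p.span_base) (use that in \<open>auto simp: genX_def\<close>)
  have sub: "P \<subseteq> {z. \<alpha> (fst z) + \<beta> (snd z) \<in> U}"
    if la: "Vector_Spaces.linear (*s) (*s) \<alpha>" and lb: "Vector_Spaces.linear (*s) (*s) \<beta>"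
      and U: "vec.subspace U"
      and gF: "\<And>v. v \<in> set F \<Longrightarrow> \<alpha> 0 + \<beta> v \<in> U"
      and gG: "\<And>j. j < length g \<Longrightarrow> \<alpha> (g ! j) + \<beta> (G ! j) \<in> U"
      and gh: "\<And>v. v \<in> set h \<Longrightarrow> \<alpha> v + \<beta> 0 \<in> U" for \<alpha> \<beta> :: "'n vsp \<Rightarrow> 'n vsp" and U
    unfolding P
  proof (rule vpair.p.span_minimal[OF _ pair_subspace[OF la lb U]], rule subsetI)
    fix z assume "z \<in> genX F g G h"
    then show "z \<in> {z. \<alpha> (fst z) + \<beta> (snd z) \<in> U}"
      by (rule genX_cases) (use lens gF gG gh in auto)
  qed
  obtain \<psi> where l\<psi>: "Vector_Spaces.linear (*s) (*s) \<psi>"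
    and \<psi>: "\<forall>i<length (f @ g @ h). \<psi> ((f @ g @ h) ! i) = (replicate (length f) 0 @ G @ replicate (length h) 0) ! i"
    using lin_exists[OF bf, of "replicate (length f) 0 @ G @ replicate (length h) 0"] lens by auto
  have \<psi>g: "\<psi> (g ! j) = G ! j" if j: "j < length g" for j
  proof -
    have e1: "(f @ g @ h) ! (length f + j) = g ! j" using j by (simp add: nth_append)
    have e2: "(replicate (length f) 0 @ G @ replicate (length h) 0) ! (length f + j) = G ! j"
      using j lens by (simp add: nth_append)
    have "length f + j < length (f @ g @ h)" using j by simp
    then show ?thesis using \<psi> e1 e2 by metis
  qed
  have \<psi>h: "\<psi> v = 0" if vh: "v \<in> set h" for v
  proof -
    obtain k where k: "k < length h" "h ! k = v" using vh by (auto simp: in_set_conv_nth)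
    have e1: "(f @ g @ h) ! (length f + length g + k) = h ! k" by (simp add: nth_append)
    have e2: "(replicate (length f) 0 @ G @ replicate (length h) 0) ! (length f + length g + k) = 0"
      using k lens by (simp add: nth_append)
    have "length f + length g + k < length (f @ g @ h)" using k by simp
    then show ?thesis using \<psi> e1 e2 k(2) by metis
  qed
  obtain kap where lkap: "Vector_Spaces.linear (*s) (*s) kap"
    and kap: "\<forall>i<length (F @ G @ H). kap ((F @ G @ H) ! i) = (replicate (length F) 0 @ g @ replicate (length H) 0) ! i"
    using lin_exists[OF bF, of "replicate (length F) 0 @ g @ replicate (length H) 0"] lens by auto
  have kapG: "kap (G ! j) = g ! j" if j: "j < length g" for j
  proof -
    have e1: "(F @ G @ H) ! (length F + j) = G ! j" using j lens by (simp add: nth_append)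
    have e2: "(replicate (length F) 0 @ g @ replicate (length H) 0) ! (length F + j) = g ! j"
      using j lens by (simp add: nth_append)
    have "length F + j < length (F @ G @ H)" using j lens by simp
    then show ?thesis using kap e1 e2 by metis
  qed
  have kapF: "kap v = 0" if vF: "v \<in> set F" for v
  proof -
    obtain k where k: "k < length F" "F ! k = v" using vF by (auto simp: in_set_conv_nth)
    have e1: "(F @ G @ H) ! k = F ! k" using k by (simp add: nth_append)
    have e2: "(replicate (length F) 0 @ g @ replicate (length H) 0) ! k = 0"
      using k lens by (simp add: nth_append)
    have "k < length (F @ G @ H)" using k by simp
    then show ?thesis using kap e1 e2 k(2) by metis
  qed
  show "rIndef P = vec.span (set F)"
  proof
    have "P \<subseteq> {z. (\<lambda>x. - \<psi> x) (fst z) + (\<lambda>x. x) (snd z) \<in> vec.span (set F)}"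
    proof (rule sub[OF lin_neg[OF l\<psi>] lin_id vec.subspace_span])
      show "\<And>v. v \<in> set F \<Longrightarrow> - \<psi> 0 + v \<in> vec.span (set F)"
        using lin_zero[OF l\<psi>] by (simp add: vec.span_base)
      show "\<And>j. j < length g \<Longrightarrow> - \<psi> (g ! j) + G ! j \<in> vec.span (set F)"
        using \<psi>g by (simp add: vec.span_zero)
      show "\<And>v. v \<in> set h \<Longrightarrow> - \<psi> v + 0 \<in> vec.span (set F)"
        using \<psi>h by (simp add: vec.span_zero)
    qed
    then show "rIndef P \<subseteq> vec.span (set F)"
      unfolding rIndef_def using lin_zero[OF l\<psi>] by auto
    show "vec.span (set F) \<subseteq> rIndef P"
      unfolding rIndef_def P using span_lift0[of "set F" "genX F g G h"] inF P by auto
  qed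
  show "rIm P = vec.span (set (F @ G))"
  proof
    have "P \<subseteq> {z. (\<lambda>x. 0) (fst z) + (\<lambda>x. x) (snd z) \<in> vec.span (set (F @ G))}"
    proof (rule sub[OF lin_0 lin_id vec.subspace_span])
      show "\<And>v. v \<in> set F \<Longrightarrow> 0 + v \<in> vec.span (set (F @ G))"
        by (simp add: vec.span_base)
      show "\<And>j. j < length g \<Longrightarrow> 0 + G ! j \<in> vec.span (set (F @ G))"
        using lens by (simp add: vec.span_base)
      show "\<And>v. v \<in> set h \<Longrightarrow> 0 + 0 \<in> vec.span (set (F @ G))"
        by (simp add: vec.span_zero)
    qed
    then show "rIm P \<subseteq> vec.span (set (F @ G))"
      unfolding rIm_def by auto
    have "\<exists>w. (w, v) \<in> vpair.p.span (genX F g G h)" if "v \<in> set (F @ G)" for v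
    proof -
      from that consider "v \<in> set F" | "v \<in> set G" by auto
      then show ?thesis
      proof cases
        case 1 then show ?thesis using inF P by blast
      next
        case 2
        then obtain j where "j < length g" "v = G ! j" using lens by (auto simp: in_set_conv_nth)
        then show ?thesis using inG P by blast
      qed
    qed
    then show "vec.span (set (F @ G)) \<subseteq> rIm P"
      unfolding rIm_def P using span_lift2[of "set (F @ G)" "genX F g G h"]
      by (force simp: image_iff)
  qed
  show "rDom P = vec.span (set (g @ h))"
  proof
    have "P \<subseteq> {z. (\<lambda>x. x) (fst z) + (\<lambda>x. 0) (snd z) \<in> vec.span (set (g @ h))}"
    proof (rule sub[OF lin_id lin_0 vec.subspace_span])
      show "\<And>v. v \<in> set F \<Longrightarrow> 0 + 0 \<in> vec.span (set (g @ h))"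
        by (simp add: vec.span_zero)
      show "\<And>j. j < length g \<Longrightarrow> g ! j + 0 \<in> vec.span (set (g @ h))"
        by (simp add: vec.span_base)
      show "\<And>v. v \<in> set h \<Longrightarrow> v + 0 \<in> vec.span (set (g @ h))"
        by (simp add: vec.span_base)
    qed
    then show "rDom P \<subseteq> vec.span (set (g @ h))"
      unfolding rDom_def by auto
    have "\<exists>w. (v, w) \<in> vpair.p.span (genX F g G h)" if "v \<in> set (g @ h)" for v
    proof -
      from that consider "v \<in> set h" | "v \<in> set g" by auto
      then show ?thesis
      proof cases
        case 1 then show ?thesis using inh P by blast
      next
        case 2
        then obtain j where "j < length g" "v = g ! j" by (auto simp: in_set_conv_nth)
        then show ?thesis using inG P by blast
      qed
    qed
    then show "vec.span (set (g @ h)) \<subseteq> rDom P"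
      unfolding rDom_def P using span_lift[of "set (g @ h)" "genX F g G h"]
      by (force simp: image_iff)
  qed
  show "rKer P = vec.span (set h)"
  proof
    have "P \<subseteq> {z. (\<lambda>x. x) (fst z) + (\<lambda>x. - kap x) (snd z) \<in> vec.span (set h)}"
    proof (rule sub[OF lin_id lin_neg[OF lkap] vec.subspace_span])
      show "\<And>v. v \<in> set F \<Longrightarrow> 0 + - kap v \<in> vec.span (set h)"
        using kapF by (simp add: vec.span_zero)
      show "\<And>j. j < length g \<Longrightarrow> g ! j + - kap (G ! j) \<in> vec.span (set h)"
        using kapG by (simp add: vec.span_zero)
      show "\<And>v. v \<in> set h \<Longrightarrow> v + - kap 0 \<in> vec.span (set h)"
        using lin_zero[OF lkap] by (simp add: vec.span_base)
    qed
    then show "rKer P \<subseteq> vec.span (set h)"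
      unfolding rKer_def using lin_zero[OF lkap] by auto
    show "vec.span (set h) \<subseteq> rKer P"
      unfolding rKer_def P using span_lift0'[of "set h" "genX F g G h"] inh P by auto
  qed
qed

lemma map_nth_lessThan:
  assumes "k \<le> length xs"
  shows "map (\<lambda>j. xs ! j) (sorted_list_of_set {..<k}) = take k xs"
proof -
  have "sorted_list_of_set {..<k} = [0..<k]" by (simp add: lessThan_atLeast0)
  then show ?thesis using assms by (auto intro!: nth_equalityI)
qed

lemma set_nth_image: "set xs = (\<lambda>j. xs ! j) ` {..<length xs}"
  by (auto simp: in_set_conv_nth)

lemma lin_vanish:
  assumes L: "Vector_Spaces.linear (*s) (*s) (L :: 'a::finite ext \<Rightarrow> 'b::finite ext)"
    and x: "x \<in> vec.span S" and z: "\<And>s. s \<in> S \<Longrightarrow> L s = 0"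
  shows "L x = 0"
  using vec.linear_eq_on[OF L lin_0 x] z by blast

lemma lin_scaled: "Vector_Spaces.linear (*s) (*s) L \<Longrightarrow> Vector_Spaces.linear (*s) (*s) (\<lambda>x. (c::complex) *s L x)"
  unfolding Vector_Spaces.linear_iff by (simp add: vec.scale_right_distrib)

lemma lin_image_span:
  assumes L: "Vector_Spaces.linear (*s) (*s) (L :: 'a::finite ext \<Rightarrow> 'b::finite ext)"
  shows "L ` vec.span S = vec.span (L ` S)"
proof -
  have "module_hom (*s) (*s) L" using L by (simp add: module_hom_iff_linear)
  then show ?thesis by (simp add: module_hom.span_image)
qed

lemma nonzero_T0:
  assumes "is_basis_list (B :: 'n::{finite,linorder} vsp list)" "k \<le> length B"
  shows "wedge (take k B) \<noteq> 0"
  using wedge_basis_nonzero[OF assms(1), of "{..<k}"] assms(2) map_nth_lessThan[OF assms(2)] by auto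

lemma head_wedge:
  fixes B B' :: "'n::{finite,linorder} vsp list"
  assumes bB: "is_basis_list B" and bB': "is_basis_list B'"
    and k: "k \<le> length B" "k \<le> length B'"
    and head: "set (take k B') \<subseteq> vec.span (set (take k B))"
  shows "\<exists>\<mu>. \<mu> \<noteq> 0 \<and> wedge (take k B') = \<mu> *s wedge (take k B)"
proof -
  let ?u = "take k B" and ?u' = "take k B'"
  have lu: "length ?u = k" and lu': "length ?u' = k" using k by auto
  have su: "set ?u = (\<lambda>j. ?u ! j) ` {..<k}" using set_nth_image[of ?u] lu by simp
  have "wedge ?u' \<in> vec.span {wedge (map (\<lambda>j. ?u ! j) (sorted_list_of_set (\<phi> ` {..<k}))) | \<phi>. \<phi> \<in> PiE {..<k} (\<lambda>_. {..<k}) \<and> inj_on \<phi> {..<k}}"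
  proof (rule wedge_in_span[OF lu'])
    fix i assume i: "i < k"
    then have "?u' ! i \<in> set ?u'" using lu' by (metis nth_mem)
    then show "?u' ! i \<in> vec.span ((\<lambda>j. ?u ! j) ` {..<k})" using head su by auto
  qed simp
  also have "\<dots> \<subseteq> vec.span {wedge ?u}"
  proof (rule vec.span_mono, rule subsetI)
    fix w assume "w \<in> {wedge (map (\<lambda>j. ?u ! j) (sorted_list_of_set (\<phi> ` {..<k}))) | \<phi>. \<phi> \<in> PiE {..<k} (\<lambda>_. {..<k}) \<and> inj_on \<phi> {..<k}}"
    then obtain \<phi> where phi: "\<phi> \<in> PiE {..<k} (\<lambda>_. {..<k})" "inj_on \<phi> {..<k}"
      and w: "w = wedge (map (\<lambda>j. ?u ! j) (sorted_list_of_set (\<phi> ` {..<k})))" by blast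
    have "\<phi> ` {..<k} \<subseteq> {..<k}" using phi(1) by auto
    moreover have "card (\<phi> ` {..<k}) = card {..<k}" using phi(2) by (simp add: card_image)
    ultimately have "\<phi> ` {..<k} = {..<k}" by (simp add: card_subset_eq)
    then have "w = wedge ?u" using w map_nth_lessThan[of k ?u] lu by simp
    then show "w \<in> {wedge ?u}" by simp
  qed
  finally obtain \<mu> where mu: "wedge ?u' = \<mu> *s wedge ?u" by (auto simp: vec.span_singleton)
  have "wedge ?u' \<noteq> 0" by (rule nonzero_T0[OF bB' k(2)])
  then have "\<mu> \<noteq> 0" using mu by auto
  then show ?thesis using mu by blast
qed

lemma set_drop_image: "set (drop k xs) = (\<lambda>j. xs ! j) ` {k..<length xs}"
proof
  show "set (drop k xs) \<subseteq> (\<lambda>j. xs ! j) ` {k..<length xs}"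
  proof
    fix x assume "x \<in> set (drop k xs)"
    then obtain i where i: "i < length xs - k" "drop k xs ! i = x" by (auto simp: in_set_conv_nth)
    then have "x = xs ! (k + i)" "k + i \<in> {k..<length xs}" by auto
    then show "x \<in> (\<lambda>j. xs ! j) ` {k..<length xs}" by blast
  qed
  show "(\<lambda>j. xs ! j) ` {k..<length xs} \<subseteq> set (drop k xs)"
  proof
    fix x assume "x \<in> (\<lambda>j. xs ! j) ` {k..<length xs}"
    then obtain j where j: "k \<le> j" "j < length xs" "x = xs ! j" by auto
    then have "drop k xs ! (j - k) = x" "j - k < length (drop k xs)" by auto
    then show "x \<in> set (drop k xs)" by (metis nth_mem)
  qed
qed

lemma compare:
  fixes b B b' B' :: "'n::{finite,linorder} vsp list"
  assumes bb: "is_basis_list b" and bB: "is_basis_list B"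
    and bb': "is_basis_list b'" and bB': "is_basis_list B'"
    and k: "k \<le> CARD('n)"
    and L: "Vector_Spaces.linear (*s) (*s) L" and L': "Vector_Spaces.linear (*s) (*s) L'"
    and LT: "\<And>T. T \<subseteq> {..<length b} \<Longrightarrow> card T = k \<Longrightarrow>
       L (wedge (map (\<lambda>j. b ! j) (sorted_list_of_set T))) = (if T = {..<k} then wedge (take k B) else 0)"
    and L'T: "\<And>T. T \<subseteq> {..<length b'} \<Longrightarrow> card T = k \<Longrightarrow>
       L' (wedge (map (\<lambda>j. b' ! j) (sorted_list_of_set T))) = (if T = {..<k} then wedge (take k B') else 0)"
    and tail: "set (drop k b) \<subseteq> vec.span (set (drop k b'))"
    and head: "set (take k B') \<subseteq> vec.span (set (take k B))"
  shows "deg_eq_upto k L L'"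
proof -
  let ?n = "CARD('n)"
  have lb: "length b = ?n" and lB: "length B = ?n" and lb': "length b' = ?n" and lB': "length B' = ?n"
    using basis_len bb bB bb' bB' by auto
  let ?W = "wedge (take k B)" and ?W' = "wedge (take k B')"
  let ?wb = "\<lambda>T. wedge (map (\<lambda>j. b ! j) (sorted_list_of_set T))"
  obtain \<mu> where mu0: "\<mu> \<noteq> 0" and mu: "?W' = \<mu> *s ?W"
    using head_wedge[OF bB bB' _ _ head] k lB lB' by auto
  have W'0: "?W' \<noteq> 0" using nonzero_T0[OF bB'] k lB' by simp
  have T0: "{..<k} \<subseteq> {..<?n}" "card {..<k} = k" using k by auto
  have sb': "vec.span (set b') = UNIV" using bb' unfolding is_basis_list_def by auto
  \<comment> \<open>Step 2: L' kills the other monomials of b\<close>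
  have van: "L' (?wb T) = 0" if T: "T \<subseteq> {..<?n}" "card T = k" "T \<noteq> {..<k}" for T
  proof -
    let ?t = "sorted_list_of_set T"
    have fT: "finite T" using T(1) finite_subset by blast
    have lt: "length ?t = k" using T by simp
    have "\<not> T \<subseteq> {..<k}"
    proof
      assume "T \<subseteq> {..<k}"
      then have "T = {..<k}" using T(2) by (simp add: card_subset_eq)
      then show False using T(3) by simp
    qed
    then have "\<exists>x\<in>T. \<not> x < k" unfolding subset_eq lessThan_iff by blast
    then obtain x where x: "x \<in> T" "k \<le> x" unfolding not_less by blast
    have "x \<in> set ?t" using x fT by simp
    then obtain i0 where i0': "i0 < length ?t" "?t ! i0 = x"
      unfolding in_set_conv_nth by blast
    then have i0: "i0 < k" "?t ! i0 = x" using lt by auto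
    define J where "J i = (if i = i0 then {k..<?n} else {..<?n})" for i
    let ?vs = "map (\<lambda>j. b ! j) ?t"
    have "?wb T \<in> vec.span {wedge (map (\<lambda>j. b' ! j) (sorted_list_of_set (\<phi> ` {..<k}))) | \<phi>. \<phi> \<in> PiE {..<k} J \<and> inj_on \<phi> {..<k}}"
    proof (rule wedge_in_span)
      show "length ?vs = k" using lt by simp
      show "\<And>i. i < k \<Longrightarrow> finite (J i)" by (simp add: J_def)
      fix i assume i: "i < k"
      show "?vs ! i \<in> vec.span ((\<lambda>j. b' ! j) ` J i)"
      proof (cases "i = i0")
        case True
        have "x < ?n" using x T by auto
        then have "b ! x \<in> set (drop k b)" using x(2) lb by (auto simp: set_drop_image)
        then have "b ! x \<in> vec.span ((\<lambda>j. b' ! j) ` {k..<?n})" using tail lb' by (auto simp: set_drop_image)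
        then show ?thesis using True i0 lt by (simp add: J_def)
      next
        case False
        have e: "(\<lambda>j. b' ! j) ` {..<?n} = set b'" using set_nth_image[of b'] lb' by simp
        have Ji: "J i = {..<?n}" using False by (simp add: J_def)
        show ?thesis unfolding Ji e sb' by simp
      qed
    qed
    then show ?thesis
    proof (rule lin_vanish[OF L'])
      fix s assume "s \<in> {wedge (map (\<lambda>j. b' ! j) (sorted_list_of_set (\<phi> ` {..<k}))) | \<phi>. \<phi> \<in> PiE {..<k} J \<and> inj_on \<phi> {..<k}}"
      then obtain \<phi> where phi: "\<phi> \<in> PiE {..<k} J" "inj_on \<phi> {..<k}"
        and s: "s = wedge (map (\<lambda>j. b' ! j) (sorted_list_of_set (\<phi> ` {..<k})))" by blast
      have Jsub: "J j \<subseteq> {..<?n}" for j by (auto simp: J_def)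
      have sub: "\<phi> ` {..<k} \<subseteq> {..<length b'}"
      proof
        fix y assume "y \<in> \<phi> ` {..<k}"
        then obtain j where j: "j < k" "y = \<phi> j" by blast
        then have "y \<in> J j" using PiE_mem[OF phi(1), of j] by simp
        then show "y \<in> {..<length b'}" unfolding lb' using Jsub[of j] by blast
      qed
      have cd: "card (\<phi> ` {..<k}) = k" using phi(2) by (simp add: card_image)
      have "\<phi> i0 \<in> {k..<?n}" using PiE_mem[OF phi(1), of i0] i0 by (simp add: J_def)
      then have n1: "\<phi> i0 \<notin> {..<k}" by simp
      have n2: "\<phi> i0 \<in> \<phi> ` {..<k}" using i0(1) by simp
      have "\<phi> ` {..<k} \<noteq> {..<k}" using n1 n2 by blast
      then show "L' s = 0" using L'T[OF sub cd] s by simp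
    qed
  qed
  \<comment> \<open>Step 3\<close>
  have wT0: "?wb {..<k} = wedge (take k b)" using map_nth_lessThan[of k b] k lb by simp
  have "?wb {..<k} \<in> extpow k" using wedge_extpow[of "map (\<lambda>j. b ! j) (sorted_list_of_set {..<k})"] by simp
  then have "?wb {..<k} \<in> vec.span (WB b' k)" using extpow_span_WB[OF bb'] by blast
  then have "L' (?wb {..<k}) \<in> L' ` vec.span (WB b' k)" by (rule imageI)
  then have "L' (?wb {..<k}) \<in> vec.span (L' ` WB b' k)" unfolding lin_image_span[OF L'] .
  also have "\<dots> \<subseteq> vec.span (insert 0 {?W'})"
  proof (rule vec.span_mono, rule subsetI)
    fix y assume "y \<in> L' ` WB b' k"
    then obtain T where "T \<subseteq> {..<length b'}" "card T = k" "y = L' (wedge (map (\<lambda>j. b' ! j) (sorted_list_of_set T)))"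
      unfolding WB_def by blast
    then show "y \<in> insert 0 {?W'}" using L'T by auto
  qed
  finally obtain d where d: "L' (?wb {..<k}) = d *s ?W'" by (auto simp: vec.span_singleton)
  \<comment> \<open>Step 4\<close>
  have d0: "d \<noteq> 0"
  proof
    assume "d = 0"
    have z: "L' s = 0" if "s \<in> WB b k" for s
    proof -
      obtain T where T: "T \<subseteq> {..<length b}" "card T = k" "s = ?wb T" using \<open>s \<in> WB b k\<close> unfolding WB_def by blast
      show ?thesis
      proof (cases "T = {..<k}")
        case True then show ?thesis using d \<open>d = 0\<close> T by simp
      next
        case False then show ?thesis using van T lb by simp
      qed
    qed
    let ?w' = "wedge (map (\<lambda>j. b' ! j) (sorted_list_of_set {..<k}))"
    have "?w' \<in> extpow k" using wedge_extpow[of "map (\<lambda>j. b' ! j) (sorted_list_of_set {..<k})"] by simp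
    then have "?w' \<in> vec.span (WB b k)" using extpow_span_WB[OF bb] by blast
    then have "L' ?w' = 0" using lin_vanish[OF L'] z by blast
    moreover have "L' ?w' = ?W'" using L'T[of "{..<k}"] T0 lb' by simp
    ultimately show False using W'0 by simp
  qed
  \<comment> \<open>Step 5\<close>
  define c where "c = inverse (d * \<mu>)"
  have c0: "c \<noteq> 0" using d0 mu0 by (simp add: c_def)
  have eqWB: "L s = c *s L' s" if sW: "s \<in> WB b k" for s
  proof -
    obtain T where T: "T \<subseteq> {..<length b}" "card T = k" "s = ?wb T" using sW unfolding WB_def by blast
    show ?thesis
    proof (cases "T = {..<k}")
      case True
      have "c *s L' s = (c * d * \<mu>) *s ?W" using d mu T True by (simp add: vec.scale_scale mult.assoc)
      also have "c * d * \<mu> = 1" using d0 mu0 by (simp add: c_def field_simps)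
      finally show ?thesis using LT[OF T(1) T(2)] T True by simp
    next
      case False
      then show ?thesis using LT[OF T(1) T(2)] van[of T] T lb by simp
    qed
  qed
  have "\<forall>x\<in>extpow k. L x = c *s L' x"
  proof
    fix x :: "'n ext" assume "x \<in> extpow k"
    then have "x \<in> vec.span (WB b k)" using extpow_span_WB[OF bb] by blast
    then show "L x = c *s L' x"
      using vec.linear_eq_on[OF L lin_scaled[OF L'], of x "WB b k"] eqWB by blast
  qed
  then show ?thesis unfolding deg_eq_upto_def using c0 by blast
qed

lemma rank_one:
  fixes b B :: "'n::{finite,linorder} vsp list"
  assumes bb: "is_basis_list b" and bB: "is_basis_list B"
    and k: "k \<le> CARD('n)"
    and L: "Vector_Spaces.linear (*s) (*s) L"
    and LT: "\<And>T. T \<subseteq> {..<length b} \<Longrightarrow> card T = k \<Longrightarrow>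
       L (wedge (map (\<lambda>j. b ! j) (sorted_list_of_set T))) = (if T = {..<k} then wedge (take k B) else 0)"
  shows "deg_rank k L = 1"
proof -
  let ?W = "wedge (take k B)"
  have lb: "length b = CARD('n)" and lB: "length B = CARD('n)" using basis_len bb bB by auto
  have W0: "?W \<noteq> 0" using nonzero_T0[OF bB] k lB by simp
  have "L ` extpow k = L ` vec.span (WB b k)" using span_WB[OF bb, of k] by simp
  also have "\<dots> = vec.span (L ` WB b k)" by (rule lin_image_span[OF L])
  also have "\<dots> = vec.span {?W}"
  proof
    show "vec.span (L ` WB b k) \<subseteq> vec.span {?W}"
    proof -
      have "L ` WB b k \<subseteq> insert 0 {?W}"
      proof
        fix y assume "y \<in> L ` WB b k"
        then obtain T where "T \<subseteq> {..<length b}" "card T = k" "y = L (wedge (map (\<lambda>j. b ! j) (sorted_list_of_set T)))"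
          unfolding WB_def by blast
        then show "y \<in> insert 0 {?W}" using LT by auto
      qed
      then have "vec.span (L ` WB b k) \<subseteq> vec.span (insert 0 {?W})" by (rule vec.span_mono)
      then show ?thesis by simp
    qed
    have "{..<k} \<subseteq> {..<length b}" "card {..<k} = k" using k lb by auto
    then have "wedge (map (\<lambda>j. b ! j) (sorted_list_of_set {..<k})) \<in> WB b k"
      unfolding WB_def by blast
    then have "L (wedge (map (\<lambda>j. b ! j) (sorted_list_of_set {..<k}))) \<in> L ` WB b k"
      by (rule imageI)
    then have "?W \<in> L ` WB b k" using LT[of "{..<k}"] k lb by simp
    then show "vec.span {?W} \<subseteq> vec.span (L ` WB b k)" by (intro vec.span_mono) auto
  qed
  finally have "deg_rank k L = vec.dim (vec.span {?W})" unfolding deg_rank_def by simp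
  also have "\<dots> = 1"
    using vec.dim_span_eq_card_independent[of "{?W}"] W0 by simp
  finally show ?thesis .
qed

lemma unpack:
  assumes "is_lambda P L"
  obtains f g h F G H :: "'n::{finite,linorder} vsp list" where
    "length F = length f" "length G = length g" "length H = length h"
    "is_basis_list (f @ g @ h)" "is_basis_list (F @ G @ H)"
    "P = vpair.p.span (genX F g G h)" "Vector_Spaces.linear (*s) (*s) L"
    "\<And>T. T \<subseteq> {..<length (f @ g @ h)} \<Longrightarrow>
        L (wedge (map (\<lambda>i. (f @ g @ h) ! i) (sorted_list_of_set T))) =
          (if {..<length f} \<subseteq> T \<and> T \<subseteq> {..<length f + length g}
           then wedge (map (\<lambda>i. (F @ G @ H) ! i) (sorted_list_of_set T)) else 0)"
  using assms unfolding is_lambda_def genX_def by blast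

lemma dim_sub:
  assumes B: "is_basis_list (B :: 'n::finite vsp list)" and xs: "set xs \<subseteq> set B" "distinct xs"
  shows "vec.dim (vec.span (set xs)) = length xs"
proof -
  have ind: "vec.independent (set xs)" using B xs vec.independent_mono unfolding is_basis_list_def by blast
  show ?thesis using vec.dim_span_eq_card_independent[OF ind] distinct_card[OF xs(2)] by simp
qed

lemma facts:
  fixes f g h F G H :: "'n::{finite,linorder} vsp list"
  assumes lens: "length F = length f" "length G = length g" "length H = length h"
    and bf: "is_basis_list (f @ g @ h)" and bF: "is_basis_list (F @ G @ H)"
    and P: "P = vpair.p.span (genX F g G h)" and L: "Vector_Spaces.linear (*s) (*s) L"
    and LT: "\<And>T. T \<subseteq> {..<length (f @ g @ h)} \<Longrightarrow>
        L (wedge (map (\<lambda>i. (f @ g @ h) ! i) (sorted_list_of_set T))) =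
          (if {..<length f} \<subseteq> T \<and> T \<subseteq> {..<length f + length g}
           then wedge (map (\<lambda>i. (F @ G @ H) ! i) (sorted_list_of_set T)) else 0)"
  shows "vec.dim (rIndef P) = length f"
    and "vec.dim (rIm P) = length f + length g"
    and "\<And>T. T \<subseteq> {..<length (f @ g @ h)} \<Longrightarrow> card T = length f \<Longrightarrow>
       L (wedge (map (\<lambda>j. (f @ g @ h) ! j) (sorted_list_of_set T))) =
       (if T = {..<length f} then wedge (take (length f) (F @ G @ H)) else 0)"
    and "\<And>T. T \<subseteq> {..<length (f @ g @ h)} \<Longrightarrow> card T = length f + length g \<Longrightarrow>
       L (wedge (map (\<lambda>j. (f @ g @ h) ! j) (sorted_list_of_set T))) =
       (if T = {..<length f + length g} then wedge (take (length f + length g) (F @ G @ H)) else 0)"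
    and "deg_nonzero m L \<longleftrightarrow> length f \<le> m \<and> m \<le> length f + length g"
proof -
  note rc = rel_chars[OF lens bf bF P]
  have dF: "distinct (F @ G @ H)" using bF unfolding is_basis_list_def by blast
  have nb: "length (f @ g @ h) = CARD('n)" and nB: "length (F @ G @ H) = CARD('n)"
    using basis_len[OF bf] basis_len[OF bF] by auto
  show "vec.dim (rIndef P) = length f"
    unfolding rc(1) using dim_sub[OF bF, of F] dF lens by auto
  show "vec.dim (rIm P) = length f + length g"
    unfolding rc(2) using dim_sub[OF bF, of "F @ G"] dF lens by auto
  show "L (wedge (map (\<lambda>j. (f @ g @ h) ! j) (sorted_list_of_set T))) =
       (if T = {..<length f} then wedge (take (length f) (F @ G @ H)) else 0)"
    if T: "T \<subseteq> {..<length (f @ g @ h)}" "card T = length f" for T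
  proof -
    have fT: "finite T" using T(1) finite_subset by blast
    have "({..<length f} \<subseteq> T \<and> T \<subseteq> {..<length f + length g}) \<longleftrightarrow> T = {..<length f}"
    proof
      assume "{..<length f} \<subseteq> T \<and> T \<subseteq> {..<length f + length g}"
      then show "T = {..<length f}" using card_subset_eq[OF fT, of "{..<length f}"] T(2) by simp
    qed auto
    moreover have "map (\<lambda>i. (F @ G @ H) ! i) (sorted_list_of_set {..<length f}) = take (length f) (F @ G @ H)"
      by (rule map_nth_lessThan) (use lens in simp)
    ultimately show ?thesis using LT[OF T(1)] by auto
  qed
  show "L (wedge (map (\<lambda>j. (f @ g @ h) ! j) (sorted_list_of_set T))) =
       (if T = {..<length f + length g} then wedge (take (length f + length g) (F @ G @ H)) else 0)"
    if T: "T \<subseteq> {..<length (f @ g @ h)}" "card T = length f + length g" for T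
  proof -
    have fT: "finite T" using T(1) finite_subset by blast
    have "({..<length f} \<subseteq> T \<and> T \<subseteq> {..<length f + length g}) \<longleftrightarrow> T = {..<length f + length g}"
    proof
      assume "{..<length f} \<subseteq> T \<and> T \<subseteq> {..<length f + length g}"
      then show "T = {..<length f + length g}" using card_subset_eq[of "{..<length f + length g}" T] T(2) by simp
    qed auto
    moreover have "map (\<lambda>i. (F @ G @ H) ! i) (sorted_list_of_set {..<length f + length g}) = take (length f + length g) (F @ G @ H)"
      by (rule map_nth_lessThan) (use lens in simp)
    ultimately show ?thesis using LT[OF T(1)] by auto
  qed
  let ?b = "f @ g @ h" and ?B = "F @ G @ H"
  show "deg_nonzero m L \<longleftrightarrow> length f \<le> m \<and> m \<le> length f + length g"
  proof
    assume "deg_nonzero m L"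
    then obtain x where x: "x \<in> extpow m" "L x \<noteq> 0" unfolding deg_nonzero_def by blast
    show "length f \<le> m \<and> m \<le> length f + length g"
    proof (rule ccontr)
      assume nm: "\<not> (length f \<le> m \<and> m \<le> length f + length g)"
      have "L s = 0" if sW: "s \<in> WB ?b m" for s
      proof -
        obtain T where T: "T \<subseteq> {..<length ?b}" "card T = m" "s = wedge (map (\<lambda>j. ?b ! j) (sorted_list_of_set T))"
          using sW unfolding WB_def by blast
        have fT: "finite T" using T(1) finite_subset by blast
        have nc: "\<not> ({..<length f} \<subseteq> T \<and> T \<subseteq> {..<length f + length g})"
        proof
          assume c: "{..<length f} \<subseteq> T \<and> T \<subseteq> {..<length f + length g}"
          then have "card {..<length f} \<le> card T" using fT card_mono by blast
          moreover have "card T \<le> card {..<length f + length g}" using c card_mono by blast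
          ultimately show False using nm T(2) by simp
        qed
        have "L s = (if {..<length f} \<subseteq> T \<and> T \<subseteq> {..<length f + length g}
           then wedge (map (\<lambda>i. (F @ G @ H) ! i) (sorted_list_of_set T)) else 0)"
          using LT[OF T(1)] T(3) by simp
        then show ?thesis using nc by (simp only: if_False)
      qed
      moreover have "x \<in> vec.span (WB ?b m)" using x(1) extpow_span_WB[OF bf] by blast
      ultimately have "L x = 0" using lin_vanish[OF L] by blast
      then show False using x(2) by simp
    qed
  next
    assume m: "length f \<le> m \<and> m \<le> length f + length g"
    let ?x = "wedge (map (\<lambda>j. ?b ! j) (sorted_list_of_set {..<m}))"
    have sub: "{..<m} \<subseteq> {..<length ?b}" using m by auto
    have "?x \<in> extpow m" using wedge_extpow[of "map (\<lambda>j. ?b ! j) (sorted_list_of_set {..<m})"] by simp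
    moreover have "L ?x = wedge (map (\<lambda>j. ?B ! j) (sorted_list_of_set {..<m}))"
      using LT[OF sub] m by auto
    moreover have "wedge (map (\<lambda>j. ?B ! j) (sorted_list_of_set {..<m})) \<noteq> 0"
      by (rule wedge_basis_nonzero[OF bF]) (use m lens in auto)
    ultimately have "?x \<in> extpow m \<and> L ?x \<noteq> 0" by simp
    then show "deg_nonzero m L" unfolding deg_nonzero_def by blast
  qed
qed

lemma Q_case:
  fixes P Q :: "('n::{finite,linorder} vsp \<times> 'n vsp) set"
  assumes lP: "is_lambda P L" and lQ: "is_lambda Q L'"
    and ind: "rIndef Q = rIndef P" and dom: "rDom Q = rDom P"
  shows "deg_eq_upto (vec.dim (rIndef P)) L L'"
proof -
  obtain f g h F G H :: "'n vsp list" where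
    l1: "length F = length f" "length G = length g" "length H = length h"
    and b1: "is_basis_list (f @ g @ h)" "is_basis_list (F @ G @ H)"
    and P: "P = vpair.p.span (genX F g G h)" and L: "Vector_Spaces.linear (*s) (*s) L"
    and LT: "\<And>T. T \<subseteq> {..<length (f @ g @ h)} \<Longrightarrow>
        L (wedge (map (\<lambda>i. (f @ g @ h) ! i) (sorted_list_of_set T))) =
          (if {..<length f} \<subseteq> T \<and> T \<subseteq> {..<length f + length g}
           then wedge (map (\<lambda>i. (F @ G @ H) ! i) (sorted_list_of_set T)) else 0)"
    using unpack[OF lP] by metis
  obtain f' g' h' F' G' H' :: "'n vsp list" where
    l2: "length F' = length f'" "length G' = length g'" "length H' = length h'"
    and b2: "is_basis_list (f' @ g' @ h')" "is_basis_list (F' @ G' @ H')"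
    and Q: "Q = vpair.p.span (genX F' g' G' h')" and L': "Vector_Spaces.linear (*s) (*s) L'"
    and LT': "\<And>T. T \<subseteq> {..<length (f' @ g' @ h')} \<Longrightarrow>
        L' (wedge (map (\<lambda>i. (f' @ g' @ h') ! i) (sorted_list_of_set T))) =
          (if {..<length f'} \<subseteq> T \<and> T \<subseteq> {..<length f' + length g'}
           then wedge (map (\<lambda>i. (F' @ G' @ H') ! i) (sorted_list_of_set T)) else 0)"
    using unpack[OF lQ] by metis
  note fP = facts[OF l1 b1 P L LT]
  note fQ = facts[OF l2 b2 Q L' LT']
  note rP = rel_chars[OF l1 b1 P]
  note rQ = rel_chars[OF l2 b2 Q]
  have a: "length f' = length f" using fP(1) fQ(1) ind by simp
  have k: "length f \<le> CARD('n)" using basis_len[OF b1(1)] by simp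
  have "deg_eq_upto (length f) L L'"
  proof (rule compare[OF b1(1) b1(2) b2(1) b2(2) k L L'])
    show "\<And>T. T \<subseteq> {..<length (f @ g @ h)} \<Longrightarrow> card T = length f \<Longrightarrow>
       L (wedge (map (\<lambda>j. (f @ g @ h) ! j) (sorted_list_of_set T))) =
       (if T = {..<length f} then wedge (take (length f) (F @ G @ H)) else 0)"
      by (rule fP(3))
    show "\<And>T. T \<subseteq> {..<length (f' @ g' @ h')} \<Longrightarrow> card T = length f \<Longrightarrow>
       L' (wedge (map (\<lambda>j. (f' @ g' @ h') ! j) (sorted_list_of_set T))) =
       (if T = {..<length f} then wedge (take (length f) (F' @ G' @ H')) else 0)"
      using fQ(3) a by simp
    have "set (drop (length f) (f @ g @ h)) = set (g @ h)" by simp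
    also have "\<dots> \<subseteq> vec.span (set (g @ h))" by (rule vec.span_superset)
    also have "\<dots> = vec.span (set (g' @ h'))" using rP(3) rQ(3) dom by simp
    also have "set (g' @ h') = set (drop (length f) (f' @ g' @ h'))" using a by simp
    finally show "set (drop (length f) (f @ g @ h)) \<subseteq> vec.span (set (drop (length f) (f' @ g' @ h')))" .
    have "set (take (length f) (F' @ G' @ H')) = set F'" using a l2 by simp
    also have "\<dots> \<subseteq> vec.span (set F')" by (rule vec.span_superset)
    also have "\<dots> = vec.span (set F)" using rP(1) rQ(1) ind by simp
    also have "set F = set (take (length f) (F @ G @ H))" using l1 by simp
    finally show "set (take (length f) (F' @ G' @ H')) \<subseteq> vec.span (set (take (length f) (F @ G @ H)))" .
  qed
  then show ?thesis using fP(1) by simp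
qed

lemma R_case:
  fixes P R :: "('n::{finite,linorder} vsp \<times> 'n vsp) set"
  assumes lP: "is_lambda P L" and lR: "is_lambda R L'"
    and im: "rIm R = rIm P" and ker: "rKer R = rKer P"
  shows "deg_eq_upto (vec.dim (rIm P)) L L'"
proof -
  obtain f g h F G H :: "'n vsp list" where
    l1: "length F = length f" "length G = length g" "length H = length h"
    and b1: "is_basis_list (f @ g @ h)" "is_basis_list (F @ G @ H)"
    and P: "P = vpair.p.span (genX F g G h)" and L: "Vector_Spaces.linear (*s) (*s) L"
    and LT: "\<And>T. T \<subseteq> {..<length (f @ g @ h)} \<Longrightarrow>
        L (wedge (map (\<lambda>i. (f @ g @ h) ! i) (sorted_list_of_set T))) =
          (if {..<length f} \<subseteq> T \<and> T \<subseteq> {..<length f + length g}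
           then wedge (map (\<lambda>i. (F @ G @ H) ! i) (sorted_list_of_set T)) else 0)"
    using unpack[OF lP] by metis
  obtain f' g' h' F' G' H' :: "'n vsp list" where
    l2: "length F' = length f'" "length G' = length g'" "length H' = length h'"
    and b2: "is_basis_list (f' @ g' @ h')" "is_basis_list (F' @ G' @ H')"
    and Q: "R = vpair.p.span (genX F' g' G' h')" and L': "Vector_Spaces.linear (*s) (*s) L'"
    and LT': "\<And>T. T \<subseteq> {..<length (f' @ g' @ h')} \<Longrightarrow>
        L' (wedge (map (\<lambda>i. (f' @ g' @ h') ! i) (sorted_list_of_set T))) =
          (if {..<length f'} \<subseteq> T \<and> T \<subseteq> {..<length f' + length g'}
           then wedge (map (\<lambda>i. (F' @ G' @ H') ! i) (sorted_list_of_set T)) else 0)"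
    using unpack[OF lR] by metis
  note fP = facts[OF l1 b1 P L LT]
  note fQ = facts[OF l2 b2 Q L' LT']
  note rP = rel_chars[OF l1 b1 P]
  note rQ = rel_chars[OF l2 b2 Q]
  let ?k = "length f + length g"
  have a: "length f' + length g' = ?k" using fP(2) fQ(2) im by simp
  have k: "?k \<le> CARD('n)" using basis_len[OF b1(1)] by simp
  have "deg_eq_upto ?k L L'"
  proof (rule compare[OF b1(1) b1(2) b2(1) b2(2) k L L'])
    show "\<And>T. T \<subseteq> {..<length (f @ g @ h)} \<Longrightarrow> card T = ?k \<Longrightarrow>
       L (wedge (map (\<lambda>j. (f @ g @ h) ! j) (sorted_list_of_set T))) =
       (if T = {..<?k} then wedge (take ?k (F @ G @ H)) else 0)"
      by (rule fP(4))
    show "\<And>T. T \<subseteq> {..<length (f' @ g' @ h')} \<Longrightarrow> card T = ?k \<Longrightarrow>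
       L' (wedge (map (\<lambda>j. (f' @ g' @ h') ! j) (sorted_list_of_set T))) =
       (if T = {..<?k} then wedge (take ?k (F' @ G' @ H')) else 0)"
      using fQ(4) a by simp
    have "set (drop ?k (f @ g @ h)) = set h" by simp
    also have "\<dots> \<subseteq> vec.span (set h)" by (rule vec.span_superset)
    also have "\<dots> = vec.span (set h')" using rP(4) rQ(4) ker by simp
    also have "drop (length f' + length g') (f' @ g' @ h') = h'" by simp
    then have "set h' = set (drop ?k (f' @ g' @ h'))" using a by simp
    finally show "set (drop ?k (f @ g @ h)) \<subseteq> vec.span (set (drop ?k (f' @ g' @ h')))" .
    have "take (length F' + length G') (F' @ G' @ H') = F' @ G'" by simp
    then have "set (take ?k (F' @ G' @ H')) = set (F' @ G')" using a l2 by simp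
    also have "\<dots> \<subseteq> vec.span (set (F' @ G'))" by (rule vec.span_superset)
    also have "\<dots> = vec.span (set (F @ G))" using rP(2) rQ(2) im by simp
    also have "take (length F + length G) (F @ G @ H) = F @ G" by simp
    then have "set (F @ G) = set (take ?k (F @ G @ H))" using l1 by simp
    finally show "set (take ?k (F' @ G' @ H')) \<subseteq> vec.span (set (take ?k (F @ G @ H)))" .
  qed
  then show ?thesis using fP(2) by simp
qed

lemma zero_in:
  assumes "is_lambda P L"
  shows "(0, 0) \<in> P"
proof -
  obtain f g h F G H :: "'a vsp list" where "P = vpair.p.span (genX F g G h)"
    using unpack[OF assms] by metis
  then show ?thesis using vpair.p.span_zero by (simp add: zero_prod_def)
qed

lemma prod_rels:
  assumes "(0, 0) \<in> P"
  shows "rIndef (rDom P \<times> rIndef P) = rIndef P" "rDom (rDom P \<times> rIndef P) = rDom P"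
    "rKer (rKer P \<times> rIm P) = rKer P" "rIm (rKer P \<times> rIm P) = rIm P"
proof -
  have d: "0 \<in> rDom P" using assms unfolding rDom_def by force
  have i: "0 \<in> rIndef P" using assms unfolding rIndef_def by simp
  have k: "0 \<in> rKer P" using assms unfolding rKer_def by simp
  have m: "0 \<in> rIm P" using assms unfolding rIm_def by force
  show "rIndef (rDom P \<times> rIndef P) = rIndef P" using d unfolding rIndef_def by auto
  show "rDom (rDom P \<times> rIndef P) = rDom P" using i unfolding rDom_def by force
  show "rKer (rKer P \<times> rIm P) = rKer P" using m unfolding rKer_def by auto
  show "rIm (rKer P \<times> rIm P) = rIm P" using k unfolding rIm_def by force
qed

theorem lemma1p3:
  fixes P :: "('n::{finite,linorder} vsp \<times> 'n vsp) set" and m :: nat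
  assumes "linrel P" and "rdim P = CARD('n)"
  shows
   "(\<forall>L. is_lambda P L \<longrightarrow>
        (deg_nonzero m L \<longleftrightarrow> vec.dim (rIndef P) \<le> m \<and> m \<le> vec.dim (rIm P)))
    \<and>
    (m = vec.dim (rIndef P) \<longrightarrow>
        (\<forall>L. is_lambda P L \<longrightarrow> deg_rank m L = 1)
      \<and> (\<forall>Q. linrel Q \<and> rdim Q = CARD('n) \<and> rIndef Q = rIndef P \<and> rDom Q = rDom P \<longrightarrow>
            (\<forall>L L'. is_lambda P L \<and> is_lambda Q L' \<longrightarrow> deg_eq_upto m L L'))
      \<and> (\<forall>L L'. is_lambda P L \<and> is_lambda (rDom P \<times> rIndef P) L' \<longrightarrow> deg_eq_upto m L L'))
    \<and>
    (m = vec.dim (rIm P) \<longrightarrow>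
        (\<forall>L. is_lambda P L \<longrightarrow> deg_rank m L = 1)
      \<and> (\<forall>R. linrel R \<and> rdim R = CARD('n) \<and> rIm R = rIm P \<and> rKer R = rKer P \<longrightarrow>
            (\<forall>L L'. is_lambda P L \<and> is_lambda R L' \<longrightarrow> deg_eq_upto m L L'))
      \<and> (\<forall>L L'. is_lambda P L \<and> is_lambda (rKer P \<times> rIm P) L' \<longrightarrow> deg_eq_upto m L L'))"
proof (intro conjI allI impI)
  fix L assume lP: "is_lambda P L"
  obtain f g h F G H :: "'n vsp list" where
    l1: "length F = length f" "length G = length g" "length H = length h"
    and b1: "is_basis_list (f @ g @ h)" "is_basis_list (F @ G @ H)"
    and PP: "P = vpair.p.span (genX F g G h)" and L: "Vector_Spaces.linear (*s) (*s) L"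
    and LT: "\<And>T. T \<subseteq> {..<length (f @ g @ h)} \<Longrightarrow>
        L (wedge (map (\<lambda>i. (f @ g @ h) ! i) (sorted_list_of_set T))) =
          (if {..<length f} \<subseteq> T \<and> T \<subseteq> {..<length f + length g}
           then wedge (map (\<lambda>i. (F @ G @ H) ! i) (sorted_list_of_set T)) else 0)"
    using unpack[OF lP] by metis
  note fP = facts[OF l1 b1 PP L LT]
  show "deg_nonzero m L \<longleftrightarrow> vec.dim (rIndef P) \<le> m \<and> m \<le> vec.dim (rIm P)"
    using fP(1) fP(2) fP(5) by simp
next
  fix L assume m: "m = vec.dim (rIndef P)" and lP: "is_lambda P L"
  obtain f g h F G H :: "'n vsp list" where
    l1: "length F = length f" "length G = length g" "length H = length h"
    and b1: "is_basis_list (f @ g @ h)" "is_basis_list (F @ G @ H)"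
    and PP: "P = vpair.p.span (genX F g G h)" and L: "Vector_Spaces.linear (*s) (*s) L"
    and LT: "\<And>T. T \<subseteq> {..<length (f @ g @ h)} \<Longrightarrow>
        L (wedge (map (\<lambda>i. (f @ g @ h) ! i) (sorted_list_of_set T))) =
          (if {..<length f} \<subseteq> T \<and> T \<subseteq> {..<length f + length g}
           then wedge (map (\<lambda>i. (F @ G @ H) ! i) (sorted_list_of_set T)) else 0)"
    using unpack[OF lP] by metis
  note fP = facts[OF l1 b1 PP L LT]
  have "deg_rank (length f) L = 1"
    by (rule rank_one[OF b1(1) b1(2) _ L fP(3)]) (use basis_len[OF b1(1)] in simp)
  then show "deg_rank m L = 1" using m fP(1) by simp
next
  fix Q L L'
  assume m: "m = vec.dim (rIndef P)"
    and Q: "linrel Q \<and> rdim Q = CARD('n) \<and> rIndef Q = rIndef P \<and> rDom Q = rDom P"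
    and LL: "is_lambda P L \<and> is_lambda Q L'"
  then show "deg_eq_upto m L L'" using Q_case[of P L Q L'] by simp
next
  fix L L'
  assume m: "m = vec.dim (rIndef P)" and LL: "is_lambda P L \<and> is_lambda (rDom P \<times> rIndef P) L'"
  then have z: "(0, 0) \<in> P" using zero_in by blast
  show "deg_eq_upto m L L'"
    using Q_case[of P L "rDom P \<times> rIndef P" L'] LL m prod_rels[OF z] by simp
next
  fix L assume m: "m = vec.dim (rIm P)" and lP: "is_lambda P L"
  obtain f g h F G H :: "'n vsp list" where
    l1: "length F = length f" "length G = length g" "length H = length h"
    and b1: "is_basis_list (f @ g @ h)" "is_basis_list (F @ G @ H)"
    and PP: "P = vpair.p.span (genX F g G h)" and L: "Vector_Spaces.linear (*s) (*s) L"
    and LT: "\<And>T. T \<subseteq> {..<length (f @ g @ h)} \<Longrightarrow>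
        L (wedge (map (\<lambda>i. (f @ g @ h) ! i) (sorted_list_of_set T))) =
          (if {..<length f} \<subseteq> T \<and> T \<subseteq> {..<length f + length g}
           then wedge (map (\<lambda>i. (F @ G @ H) ! i) (sorted_list_of_set T)) else 0)"
    using unpack[OF lP] by metis
  note fP = facts[OF l1 b1 PP L LT]
  have "deg_rank (length f + length g) L = 1"
    by (rule rank_one[OF b1(1) b1(2) _ L fP(4)]) (use basis_len[OF b1(1)] in simp)
  then show "deg_rank m L = 1" using m fP(2) by simp
next
  fix R L L'
  assume m: "m = vec.dim (rIm P)"
    and R: "linrel R \<and> rdim R = CARD('n) \<and> rIm R = rIm P \<and> rKer R = rKer P"
    and LL: "is_lambda P L \<and> is_lambda R L'"
  then show "deg_eq_upto m L L'" using R_case[of P L R L'] by simp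
next
  fix L L'
  assume m: "m = vec.dim (rIm P)" and LL: "is_lambda P L \<and> is_lambda (rKer P \<times> rIm P) L'"
  then have z: "(0, 0) \<in> P" using zero_in by blast
  show "deg_eq_upto m L L'"
    using R_case[of P L "rKer P \<times> rIm P" L'] LL m prod_rels[OF z] by simp
qed

end
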